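(* Let $a$ be a real number with $a\ge 3$ and let $k\in\mathbb{N}$. Then $$\frac{2\cdot(2k)!}{\pi^{2k}(2^{2k}-1)}\,\frac{a^{2k}}{a^{2k}-1} < |B_{2k}|.$$
   Context: $B_n$ denotes the Bernoulli numbers, defined by $\frac{x}{e^x-1}=\sum_{n=0}^\infty B_n \frac{x^n}{n!}$ for $|x|<2\pi$. $\mathbb{N}=\{1,2,3,\dots\}$. *)

theory Defs
  imports "HOL-Analysis.Analysis"
begin

text \<open>Bernoulli numbers, defined (as in the paper) as the unique real sequence B with
  x / (exp x - 1) = sum of B n * x^n / n! for 0 < |x| < 2 pi
  (at x = 0 the left side is read as its limit 1, which only constrains B 0).\<close>
definition bernoulli_num :: "nat \<Rightarrow> real" where
  "bernoulli_num = (THE B. \<forall>x::real. \<bar>x\<bar> < 2 * pi \<longrightarrow>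
      (\<lambda>n. B n * x ^ n / fact n) sums (if x = 0 then 1 else x / (exp x - 1)))"

end

theory Submission
  imports Defs
begin

lemma cot_digamma:
  fixes z :: complex
  assumes z: "z \<notin> \<int>"
  shows "of_real pi * cot (of_real pi * z) = Digamma (1 - z) - Digamma z"
proof -
  have z1: "z \<notin> \<int>\<^sub>\<le>\<^sub>0" using z nonpos_Ints_subset_Ints by blast
  have z2': "1 - z \<notin> \<int>" using z Ints_diff[of 1 "1 - z"] by auto
  have z2: "1 - z \<notin> \<int>\<^sub>\<le>\<^sub>0" using z2' nonpos_Ints_subset_Ints by blast
  have s: "sin (of_real pi * z) \<noteq> 0" using z by (subst sin_eq_0) auto
  have eq: "(\<lambda>w. Gamma w * Gamma (1 - w)) = (\<lambda>w::complex. of_real pi / sin (of_real pi * w))"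
    using Gamma_reflection_complex by auto
  have d1: "((\<lambda>w. Gamma w * Gamma (1 - w)) has_field_derivative
      (Gamma z * Digamma z * Gamma (1 - z) - Gamma z * (Gamma (1 - z) * Digamma (1 - z)))) (at z)"
    using z1 z2 by (auto intro!: derivative_eq_intros simp: algebra_simps)
  have d2: "((\<lambda>w::complex. of_real pi / sin (of_real pi * w)) has_field_derivative
      (- (of_real pi * (cos (of_real pi * z) * of_real pi)) / (sin (of_real pi * z))^2)) (at z)"
    using s by (auto intro!: derivative_eq_intros simp: power2_eq_square)
  have D: "Gamma z * Digamma z * Gamma (1 - z) - Gamma z * (Gamma (1 - z) * Digamma (1 - z))
      = - (of_real pi * (cos (of_real pi * z) * of_real pi)) / (sin (of_real pi * z))^2"
    using DERIV_unique[OF d1 d2[folded eq]] .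
  have G: "Gamma z * Gamma (1 - z) = of_real pi / sin (of_real pi * z)"
    using Gamma_reflection_complex by auto
  have "(Gamma z * Gamma (1 - z)) * (Digamma z - Digamma (1 - z)) =
     (of_real pi / sin (of_real pi * z)) * (- of_real pi * cos (of_real pi * z) / sin (of_real pi * z))"
    using D s by (simp add: algebra_simps power2_eq_square)
  also have "(of_real pi / sin (of_real pi * z)) = Gamma z * Gamma (1 - z)" using G by simp
  finally have "(Gamma z * Gamma (1 - z)) * (Digamma z - Digamma (1 - z)) =
     (Gamma z * Gamma (1 - z)) * (- of_real pi * cos (of_real pi * z) / sin (of_real pi * z))" .
  moreover have "Gamma z * Gamma (1 - z) \<noteq> 0" using G s by simp
  ultimately have "Digamma z - Digamma (1 - z) = - of_real pi * cos (of_real pi * z) / sin (of_real pi * z)"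
    by (subst (asm) mult_left_cancel) auto
  then show ?thesis by (simp add: cot_def algebra_simps)
qed

lemma cot_series:
  fixes z :: complex
  assumes z: "z \<notin> \<int>"
  shows "(\<lambda>n. 2 * z / (z^2 - (of_nat n + 1)^2)) sums (of_real pi * cot (of_real pi * z) - 1 / z)"
proof -
  have z0: "z \<noteq> 0" using z by auto
  have z1: "1 - z \<noteq> 0" using z by (metis Ints_1 right_minus_eq)
  have nz1: "z + of_nat n \<noteq> 0" for n
  proof
    assume "z + of_nat n = 0"
    hence "z = - of_nat n" by (simp add: eq_neg_iff_add_eq_0)
    thus False using z by (metis Ints_minus Ints_of_nat)
  qed
  have nz2: "of_nat n + 1 - z \<noteq> 0" for n
    using z by (metis Ints_1 Ints_add Ints_of_nat right_minus_eq)
  define a where "a n = inverse (z + of_nat n)" for n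
  define b where "b n = inverse (1 - z + of_nat n)" for n
  have sa: "(\<lambda>n. inverse (of_nat (Suc n)) - a n) sums (Digamma z + euler_mascheroni)"
    using summable_Digamma[OF z0] unfolding a_def by (simp add: Digamma_def summable_sums)
  have sb: "(\<lambda>n. inverse (of_nat (Suc n)) - b n) sums (Digamma (1 - z) + euler_mascheroni)"
    using summable_Digamma[OF z1] unfolding b_def by (simp add: Digamma_def summable_sums)
  have "(\<lambda>n. a n - b n) sums (Digamma (1 - z) - Digamma z)"
    using sums_diff[OF sb sa] by simp
  hence s1: "(\<lambda>n. a n - b n) sums (of_real pi * cot (of_real pi * z))"
    using cot_digamma[OF z] by simp
  have "a \<longlonglongrightarrow> 0" unfolding a_def
    by (intro filterlim_compose[OF tendsto_inverse_0]
              tendsto_add_filterlim_at_infinity[OF tendsto_const] tendsto_of_nat)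
  from telescope_sums'[OF this] have s2: "(\<lambda>n. a n - a (Suc n)) sums (a 0)" by simp
  have "(\<lambda>n. (a n - b n) - (a n - a (Suc n))) sums (of_real pi * cot (of_real pi * z) - a 0)"
    using sums_diff[OF s1 s2] .
  moreover have "(a n - b n) - (a n - a (Suc n)) = 2 * z / (z^2 - (of_nat n + 1)^2)" for n
  proof -
    have "(a n - b n) - (a n - a (Suc n)) = inverse (z + (of_nat n + 1)) - inverse (of_nat n + 1 - z)"
      by (simp add: a_def b_def algebra_simps)
    also have "\<dots> = ((of_nat n + 1 - z) - (z + (of_nat n + 1))) / ((z + (of_nat n + 1)) * (of_nat n + 1 - z))"
      using nz1[of "Suc n"] nz2[of n] by (simp add: field_simps)
    also have "\<dots> = 2 * z / (z^2 - (of_nat n + 1)^2)"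
    proof -
      have e1: "(of_nat n + 1 - z) - (z + (of_nat n + 1)) = 2*z * (-1)" by (simp add: algebra_simps)
      have e2: "(z + (of_nat n + 1)) * (of_nat n + 1 - z) = (z^2 - (of_nat n + 1)^2) * (-1::complex)"
        by (simp add: algebra_simps power2_eq_square)
      show ?thesis unfolding e1 e2 by (rule mult_divide_mult_cancel_right) simp
    qed
    finally show ?thesis .
  qed
  moreover have "a 0 = 1 / z" by (simp add: a_def divide_inverse)
  ultimately show ?thesis by simp
qed

lemma coth_series:
  fixes y :: real
  assumes y: "y \<noteq> 0"
  shows "(\<lambda>n. 2 * y / (y^2 + (real n + 1)^2)) sums
           (pi * (exp (pi*y) + inverse (exp (pi*y))) / (exp (pi*y) - inverse (exp (pi*y))) - 1 / y)"
proof -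
  define z where "z = \<i> * complex_of_real y"
  have zI: "z \<notin> \<int>"
  proof
    assume "z \<in> \<int>"
    hence "Im z = 0" by (auto elim!: Ints_cases)
    thus False using y by (simp add: z_def)
  qed
  define t where "t = pi * y"
  define C where "C = (exp t + inverse (exp t)) / 2"
  define S where "S = (exp t - inverse (exp t)) / 2"
  have S0: "S \<noteq> 0"
  proof
    assume "S = 0"
    hence "exp t = inverse (exp t)" by (simp add: S_def)
    hence "exp t * exp t = 1" by (metis exp_not_eq_zero right_inverse)
    hence "exp (t + t) = 1" by (simp only: exp_add)
    hence "t + t = 0" by simp
    hence "t = 0" by simp
    thus False using y by (simp add: t_def)
  qed
  have pz: "of_real pi * z = \<i> * of_real t" by (simp add: z_def t_def)
  have cosz: "cos (of_real pi * z) = of_real C"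
    unfolding pz C_def using cosh_real[of t] by simp
  have sinz: "sin (of_real pi * z) = \<i> * of_real S"
    unfolding pz S_def sin_i_times by (simp add: exp_of_real)
  have A: "(\<lambda>n. \<i> * (2 * z / (z^2 - (of_nat n + 1)^2))) sums (\<i> * (of_real pi * cot (of_real pi * z) - 1 / z))"
    by (rule sums_mult[OF cot_series[OF zI]])
  moreover have B: "\<i> * (2 * z / (z^2 - (of_nat n + 1)^2)) = of_real (2 * y / (y^2 + (real n + 1)^2))" for n
  proof -
    have e1: "z^2 - (of_nat n + 1)^2 = - ((complex_of_real y)^2 + (of_nat n + 1)^2)"
      by (simp add: z_def power_mult_distrib)
    have e2: "\<i> * (2 * z) = - (2 * complex_of_real y)"
      by (simp add: z_def mult.assoc[symmetric])
    have "\<i> * (2 * z / (z^2 - (of_nat n + 1)^2)) = (\<i> * (2 * z)) / (z^2 - (of_nat n + 1)^2)"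
      by simp
    also have "\<dots> = (2 * complex_of_real y) / ((complex_of_real y)^2 + (of_nat n + 1)^2)"
      unfolding e1 e2 by (simp only: minus_divide_divide)
    also have "\<dots> = of_real (2 * y / (y^2 + (real n + 1)^2))" by simp
    finally show ?thesis .
  qed
  moreover have Cv: "\<i> * (of_real pi * cot (of_real pi * z) - 1 / z) =
      of_real (pi * (exp (pi*y) + inverse (exp (pi*y))) / (exp (pi*y) - inverse (exp (pi*y))) - 1 / y)"
  proof -
    have "pi * (exp (pi*y) + inverse (exp (pi*y))) / (exp (pi*y) - inverse (exp (pi*y))) = pi * C / S"
      by (simp add: C_def S_def t_def)
    moreover have "\<i> * (of_real pi * cot (of_real pi * z) - 1 / z) = of_real (pi * C / S - 1 / y)"
    proof -
      have "\<i> * (of_real pi * cot (of_real pi * z) - 1 / z) =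
          of_real pi * (\<i> * (of_real C / (\<i> * of_real S))) - \<i> / (\<i> * of_real y)"
        unfolding cot_def cosz sinz by (simp add: z_def algebra_simps)
      also have "\<i> * (of_real C / (\<i> * of_real S)) = of_real C / of_real S" by simp
      also have "\<i> / (\<i> * of_real y) = 1 / of_real y" by simp
      finally show ?thesis by simp
    qed
    ultimately show ?thesis by simp
  qed
  ultimately show ?thesis using A by (simp only: B Cv sums_of_real_iff)
qed

lemma gen_series:
  fixes x :: real
  assumes x: "x \<noteq> 0"
  shows "(\<lambda>n. 2 * (x/(2*pi))^2 / ((x/(2*pi))^2 + (real n + 1)^2)) sums (x / (exp x - 1) + x/2 - 1)"
proof -
  define y where "y = x / (2*pi)"
  have y: "y \<noteq> 0" using x by (simp add: y_def)
  define E where "E = exp (pi * y)"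
  have py: "pi * y = x / 2" by (simp add: y_def)
  have EE: "E * E = exp x" unfolding E_def py by (simp flip: exp_add)
  have E0: "E > 0" by (simp add: E_def)
  have ex: "exp x - 1 \<noteq> 0" using x by simp
  have "(\<lambda>n. y * (2 * y / (y^2 + (real n + 1)^2))) sums
       (y * (pi * (E + inverse E) / (E - inverse E) - 1 / y))"
    unfolding E_def by (rule sums_mult[OF coth_series[OF y]])
  moreover have "y * (2 * y / (y^2 + (real n + 1)^2)) = 2 * y^2 / (y^2 + (real n + 1)^2)" for n
    by (simp add: power2_eq_square)
  moreover have "y * (pi * (E + inverse E) / (E - inverse E) - 1 / y) = x / (exp x - 1) + x/2 - 1"
  proof -
    have EE1: "E * E - 1 \<noteq> 0" using EE ex by simp
    have "(E + inverse E) / (E - inverse E) = (E * E + 1) / (E * E - 1)"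
    proof -
      have "E + inverse E = (E * E + 1) / E" "E - inverse E = (E * E - 1) / E"
        using E0 by (simp_all add: field_simps)
      thus ?thesis using E0 by simp
    qed
    also have "\<dots> = (exp x + 1) / (exp x - 1)" using EE by simp
    finally have 1: "(E + inverse E) / (E - inverse E) = (exp x + 1) / (exp x - 1)" .
    define R where "R = (E + inverse E) / (E - inverse E)"
    have "y * (pi * (E + inverse E) / (E - inverse E) - 1 / y) = y * (pi * R) - y * (1 / y)"
      by (simp add: R_def right_diff_distrib)
    also have "\<dots> = (pi * y) * ((E + inverse E) / (E - inverse E)) - 1"
      using y by (simp add: R_def)
    also have "\<dots> = x / 2 * ((exp x + 1) / (exp x - 1)) - 1" unfolding 1 py ..
    also have "\<dots> = x / (exp x - 1) + x/2 - 1" using ex by (simp add: field_simps)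
    finally show ?thesis .
  qed
  ultimately show ?thesis by (simp add: y_def)
qed

lemma swap_sums:
  fixes f :: "nat \<Rightarrow> nat \<Rightarrow> real"
  assumes g: "\<And>n. (\<lambda>k. f n k) sums g n"
    and ab: "\<And>n. summable (\<lambda>k. \<bar>f n k\<bar>)"
    and ab2: "summable (\<lambda>n. \<Sum>k. \<bar>f n k\<bar>)"
    and h: "\<And>k. (\<lambda>n. f n k) sums h k"
  shows "h sums (suminf g)"
proof -
  define F where "F = (\<lambda>(n,k). f n k)"
  have i1: "infsum (\<lambda>k. \<bar>f n k\<bar>) UNIV = (\<Sum>k. \<bar>f n k\<bar>)" for n
    using norm_summable_imp_has_sum[of "\<lambda>k. \<bar>f n k\<bar>"] ab[of n] summable_sums[OF ab[of n]]
    by (simp add: infsumI)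
  have "(\<lambda>x. norm (F x)) summable_on Sigma UNIV (\<lambda>_. UNIV)"
  proof (rule Infinite_Sum.abs_summable_on_Sigma_iff[where f=F and A=UNIV and B="\<lambda>_. UNIV", THEN iffD2], intro conjI ballI)
    fix n :: nat
    show "(\<lambda>k. norm (F (n, k))) summable_on UNIV"
      using norm_summable_imp_summable_on[of "\<lambda>k. norm (F (n,k))"] ab[of n] by (simp add: F_def)
  next
    have eqF: "infsum (\<lambda>k. norm (F (n, k))) UNIV = (\<Sum>k. \<bar>f n k\<bar>)" for n
      using i1 by (simp add: F_def)
    have sumF: "(\<lambda>n. norm (\<Sum>k. \<bar>f n k\<bar>)) summable_on UNIV"
      using norm_summable_imp_summable_on[of "\<lambda>n. norm (\<Sum>k. \<bar>f n k\<bar>)"] ab2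
      by (simp add: suminf_nonneg[OF ab])
    show "(\<lambda>n. norm (infsum (\<lambda>k. norm (F (n, k))) UNIV)) summable_on UNIV"
      unfolding eqF by (rule sumF)
  qed
  hence Fs: "(\<lambda>(n,k). f n k) summable_on UNIV \<times> UNIV"
    using abs_summable_summable unfolding F_def by fastforce
  have ig: "infsum (\<lambda>k. f n k) UNIV = g n" for n
  proof -
    have "((\<lambda>k. f n k) has_sum g n) UNIV"
      by (rule norm_summable_imp_has_sum) (use ab g in auto)
    thus ?thesis by (simp add: infsumI)
  qed
  have sw: "(\<lambda>(k,n). f n k) summable_on UNIV \<times> UNIV"
    using summable_on_swap[of "\<lambda>(n,k). f n k" UNIV UNIV, THEN iffD1, OF Fs] by simp
  have ih: "infsum (\<lambda>n. f n k) UNIV = h k" for k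
  proof -
    have le: "norm \<bar>f n k\<bar> \<le> (\<Sum>k. \<bar>f n k\<bar>)" for n
      using sum_le_suminf[OF ab[of n], of "{k}"] by simp
    have "summable (\<lambda>n. \<bar>f n k\<bar>)"
      by (rule summable_comparison_test[OF _ ab2]) (use le in blast)
    hence "((\<lambda>n. f n k) has_sum h k) UNIV"
      by (intro norm_summable_imp_has_sum h) simp
    thus ?thesis by (simp add: infsumI)
  qed
  have gs: "g summable_on UNIV"
    using summable_on_Sigma_banach[of "\<lambda>n k. f n k" UNIV "\<lambda>_. UNIV"] Fs ig by simp
  have hs: "h summable_on UNIV"
    using summable_on_Sigma_banach[of "\<lambda>k n. f n k" UNIV "\<lambda>_. UNIV"] sw ih by simp
  have "infsum g UNIV = infsum h UNIV"
    using infsum_swap_banach[of f UNIV UNIV] Fs ig ih by simp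
  moreover have "infsum g UNIV = suminf g"
    using has_sum_imp_sums[of g "infsum g UNIV"] gs by (simp add: sums_iff)
  ultimately show ?thesis
    using has_sum_imp_sums[of h "infsum h UNIV"] hs by simp
qed

definition zz :: "nat \<Rightarrow> real" where
  "zz j = (\<Sum>n. 1 / (real n + 1) ^ (2 * j))"

lemma summable_zz:
  assumes "p \<ge> 2"
  shows "summable (\<lambda>n. 1 / (real n + 1) ^ p)"
proof -
  have "summable (\<lambda>n. inverse (real n ^ p))" using inverse_power_summable[of p] assms by simp
  hence "summable (\<lambda>n. inverse (real (Suc n) ^ p))" by (subst summable_Suc_iff)
  thus ?thesis by (simp add: inverse_eq_divide add.commute)
qed

lemma main_series:
  fixes x :: real
  assumes x0: "x \<noteq> 0" and x: "\<bar>x\<bar> < 2 * pi"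
  shows "(\<lambda>k. 2 * (-1)^k * ((x/(2*pi))^2)^(k+1) * zz (k+1)) sums (x / (exp x - 1) + x/2 - 1)"
proof -
  define q where "q = (x/(2*pi))^2"
  have q0: "q \<ge> 0" by (simp add: q_def)
  have q1: "q < 1"
  proof -
    have "\<bar>x/(2*pi)\<bar> < 1" using x by (simp add: abs_divide)
    hence "\<bar>x/(2*pi)\<bar>^2 < 1^2" by (intro power_strict_mono) auto
    thus ?thesis unfolding q_def by (simp only: power2_abs one_power2)
  qed
  define r where "r n = q / (real n + 1)^2" for n
  have r0: "r n \<ge> 0" for n by (simp add: r_def q0)
  have rq: "r n \<le> q" for n
  proof -
    have "1 \<le> (real n + 1)^2" by simp
    thus ?thesis unfolding r_def using q0 by (simp add: divide_le_eq mult_le_cancel_left1 order_trans[OF _ mult_right_mono])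
  qed
  have r1: "r n < 1" for n using rq[of n] q1 by linarith
  define f where "f n k = 2 * r n * (- r n)^k" for n k
  define g where "g n = 2 * r n / (1 + r n)" for n
  have fg: "(\<lambda>k. f n k) sums g n" for n
  proof -
    have "norm (- r n) < 1" using r0[of n] r1[of n] by simp
    from sums_mult[OF geometric_sums[OF this], of "2 * r n"]
    show ?thesis by (simp add: f_def g_def)
  qed
  have fa: "(\<lambda>k. \<bar>f n k\<bar>) sums (2 * r n / (1 - r n))" for n
  proof -
    have "norm (r n) < 1" using r0[of n] r1[of n] by simp
    from sums_mult[OF geometric_sums[OF this], of "2 * r n"]
    show ?thesis using r0[of n] by (simp add: f_def abs_mult power_abs)
  qed
  have ab: "summable (\<lambda>k. \<bar>f n k\<bar>)" for n using fa by (rule sums_summable)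
  have ab2: "summable (\<lambda>n. \<Sum>k. \<bar>f n k\<bar>)"
  proof -
    have s: "summable (\<lambda>n. (2 * q / (1 - q)) * (1 / (real n + 1)^2))"
      by (rule summable_mult[OF summable_zz]) simp
    have "norm (\<Sum>k. \<bar>f n k\<bar>) \<le> (2 * q / (1 - q)) * (1 / (real n + 1)^2)" for n
    proof -
      have "(\<Sum>k. \<bar>f n k\<bar>) = 2 * r n / (1 - r n)" using fa[of n] by (simp add: sums_iff)
      also have "\<dots> \<le> 2 * r n / (1 - q)"
        using r0[of n] rq[of n] q1 by (intro divide_left_mono) auto
      also have "\<dots> = (2 * q / (1 - q)) * (1 / (real n + 1)^2)" by (simp add: r_def)
      finally show ?thesis using suminf_nonneg[OF ab[of n]] by simp
    qed
    thus ?thesis by (intro summable_comparison_test[OF _ s]) blast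
  qed
  have fh: "(\<lambda>n. f n k) sums (2 * (-1)^k * q^(k+1) * zz (k+1))" for k
  proof -
    have "(\<lambda>n. 1 / (real n + 1) ^ (2 * (k+1))) sums zz (k+1)"
      unfolding zz_def by (intro summable_sums summable_zz) simp
    from sums_mult[OF this, of "2 * (-1)^k * q^(k+1)"]
    have "(\<lambda>n. 2 * (-1)^k * q^(k+1) * (1 / (real n + 1) ^ (2 * (k+1)))) sums (2 * (-1)^k * q^(k+1) * zz (k+1))" .
    moreover have "f n k = 2 * (-1)^k * q^(k+1) * (1 / (real n + 1) ^ (2 * (k+1)))" for n
      by (simp add: f_def r_def power_minus' power_divide power_mult power2_eq_square power_mult_distrib mult_ac)
    ultimately show ?thesis by simp
  qed
  have "(\<lambda>k. 2 * (-1)^k * q^(k+1) * zz (k+1)) sums (suminf g)"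
    by (rule swap_sums[OF fg ab ab2 fh])
  moreover have "g sums (x / (exp x - 1) + x/2 - 1)"
  proof -
    have "g n = 2 * (x/(2*pi))^2 / ((x/(2*pi))^2 + (real n + 1)^2)" for n
    proof -
      have m: "(real n + 1)^2 > 0" by simp
      show ?thesis unfolding g_def r_def q_def using m by (simp add: field_simps)
    qed
    hence "g = (\<lambda>n. 2 * (x/(2*pi))^2 / ((x/(2*pi))^2 + (real n + 1)^2))" by (intro ext)
    thus ?thesis using gen_series[OF x0] by (simp only:)
  qed
  ultimately show ?thesis by (simp add: sums_iff q_def)
qed

definition Bn :: "nat \<Rightarrow> real" where
  "Bn n = (if n = 0 then 1 else if n = 1 then -1/2 else if odd n then 0
           else 2 * (-1)^(n div 2 + 1) * fact n * zz (n div 2) / (2*pi)^n)"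

lemma Bn_sums:
  fixes x :: real
  assumes x: "\<bar>x\<bar> < 2 * pi"
  shows "(\<lambda>n. Bn n * x ^ n / fact n) sums (if x = 0 then 1 else x / (exp x - 1))"
proof (cases "x = 0")
  case True
  have "(\<lambda>n. (Bn n / fact n) * 0 ^ n) sums (Bn 0 / fact 0)" by (rule powser_sums_zero)
  thus ?thesis using True by (simp add: Bn_def)
next
  case False
  define h where "h n = Bn n * x ^ n / fact n" for n
  have h2: "h (2 * k + 2) = 2 * (-1)^k * ((x/(2*pi))^2)^(k+1) * zz (k+1)" for k
  proof -
    have d: "(2 * k + 2) div 2 = k + 1" by simp
    have "h (2 * k + 2) = 2 * (-1)^(k + 2) * zz (k+1) * (x ^ (2*k+2) / (2*pi)^(2*k+2))"
    proof -
      have "Bn (2 * k + 2) = (2 * (-1)^(k + 2) * zz (k+1)) * fact (2*k+2) / (2*pi)^(2*k+2)"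
        unfolding Bn_def d by (simp add: mult_ac)
      moreover have "(a * F / P) * X / F = a * (X / P)" if "F \<noteq> 0" for a F P X :: real
        using that by simp
      ultimately show ?thesis unfolding h_def by simp
    qed
    also have "x ^ (2*k+2) / (2*pi)^(2*k+2) = ((x/(2*pi))^2)^(k+1)"
    proof -
      have "((x/(2*pi))^2)^(k+1) = (x/(2*pi))^(2*(k+1))" by (rule power_mult[symmetric])
      also have "2*(k+1) = 2*k+2" by simp
      also have "(x/(2*pi))^(2*k+2) = x^(2*k+2)/(2*pi)^(2*k+2)" by (rule power_divide)
      finally show ?thesis by simp
    qed
    finally show ?thesis by simp
  qed
  have "(\<lambda>k. h (2 * k + 2)) sums (x / (exp x - 1) + x/2 - 1)"
    unfolding h2 by (rule main_series[OF False x])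
  moreover have "x / (exp x - 1) + x/2 - 1 = x / (exp x - 1) - (h 0 + h 1)" by (simp add: h_def Bn_def)
  ultimately have "(\<lambda>k. h (2 * k + 2)) sums (x / (exp x - 1) - (h 0 + h 1))"
    by (simp only:)
  hence "(\<lambda>m. h (m + 2)) sums (x / (exp x - 1) - (h 0 + h 1))"
  proof (subst sums_mono_reindex[of "\<lambda>k. 2 * k", symmetric])
    show "strict_mono (\<lambda>k. 2 * k :: nat)" by (auto simp: strict_mono_def)
    fix n assume "n \<notin> range (\<lambda>k. 2 * k :: nat)"
    hence "odd n" by (metis evenE rangeI)
    thus "h (n + 2) = 0" by (simp add: h_def Bn_def)
  qed (simp add: add.commute)
  hence "h sums (x / (exp x - 1) - (h 0 + h 1) + (\<Sum>i<2. h i))"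
    by (subst (asm) sums_iff_shift)
  hence "h sums (x / (exp x - 1))" by (simp add: h_def numeral_2_eq_2)
  thus ?thesis using False unfolding h_def[abs_def] by simp
qed

lemma powser_unique_aux:
  fixes d :: "nat \<Rightarrow> real"
  assumes s: "s > 0" and h: "\<And>x. x \<noteq> 0 \<Longrightarrow> \<bar>x\<bar> < s \<Longrightarrow> (\<lambda>n. d n * x ^ n) sums 0"
  shows "d m = 0"
  using h
proof (induction m arbitrary: d)
  case 0
  have "((\<lambda>_. 0::real) \<longlongrightarrow> d 0) (at (0::real))"
    by (rule powser_limit_0_strong[where a=d and f="\<lambda>_. 0", OF s]) (use 0 in auto)
  moreover have "((\<lambda>_. 0::real) \<longlongrightarrow> 0) (at (0::real))" by simp
  ultimately show ?case using tendsto_unique[of "at (0::real)"] by (metis at_neq_bot)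
next
  case (Suc m)
  have d0: "d 0 = 0"
  proof -
    have "((\<lambda>_. 0::real) \<longlongrightarrow> d 0) (at (0::real))"
      by (rule powser_limit_0_strong[where a=d and f="\<lambda>_. 0", OF s]) (use Suc.prems in auto)
    moreover have "((\<lambda>_. 0::real) \<longlongrightarrow> 0) (at (0::real))" by simp
    ultimately show ?thesis using tendsto_unique[of "at (0::real)"] by (metis at_neq_bot)
  qed
  have "(\<lambda>n. d (Suc n) * x ^ n) sums 0" if "x \<noteq> 0" "\<bar>x\<bar> < s" for x
  proof -
    have "(\<lambda>n. d n * x ^ n) sums 0" using Suc.prems that by auto
    hence "(\<lambda>n. d (Suc n) * x ^ Suc n) sums 0" using d0 by (subst sums_Suc_iff) simp
    hence "(\<lambda>n. (d (Suc n) * x ^ Suc n) / x) sums (0 / x)" by (rule sums_divide)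
    thus ?thesis using that by simp
  qed
  from Suc.IH[OF this] show ?case by simp
qed

lemma bernoulli_num_eq: "bernoulli_num = Bn"
  unfolding bernoulli_num_def
proof (rule the_equality)
  show "\<forall>x::real. \<bar>x\<bar> < 2 * pi \<longrightarrow>
      (\<lambda>n. Bn n * x ^ n / fact n) sums (if x = 0 then 1 else x / (exp x - 1))"
    using Bn_sums by blast
next
  fix B assume B: "\<forall>x::real. \<bar>x\<bar> < 2 * pi \<longrightarrow>
      (\<lambda>n. B n * x ^ n / fact n) sums (if x = 0 then 1 else x / (exp x - 1))"
  show "B = Bn"
  proof
    fix m
    define d where "d n = (B n - Bn n) / fact n" for n
    have "(\<lambda>n. d n * x ^ n) sums 0" if "x \<noteq> 0" "\<bar>x\<bar> < 2 * pi" for x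
    proof -
      from sums_diff[OF B[rule_format, OF that(2)] Bn_sums[OF that(2)]]
      show ?thesis by (simp add: d_def diff_divide_distrib left_diff_distrib)
    qed
    from powser_unique_aux[of "2*pi" d m, OF _ this] have "d m = 0" by simp
    thus "B m = Bn m" by (simp add: d_def)
  qed
qed

lemma zz_split:
  assumes k: "k \<ge> 1"
  defines "f \<equiv> (\<lambda>n. 1 / (real n + 1) ^ (2 * k))"
  shows "summable (\<lambda>n. f (2 * n))"
    and "zz k = (\<Sum>n. f (2 * n)) + zz k / 4 ^ k"
proof -
  have fs: "summable f" unfolding f_def by (rule summable_zz) (use k in simp)
  have f0: "f n \<ge> 0" for n by (simp add: f_def)
  have fmono: "f (2 * n) \<le> f n" for n
    unfolding f_def by (intro divide_left_mono power_mono mult_pos_pos) auto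
  show se: "summable (\<lambda>n. f (2 * n))"
    by (rule summable_comparison_test[OF _ fs]) (use f0 fmono in auto)
  have Zs: "f sums zz k" unfolding zz_def f_def using fs unfolding f_def by (rule summable_sums)
  have odd_eq: "f (2 * n + 1) = f n / 4 ^ k" for n
  proof -
    have "(real (2 * n + 1) + 1) ^ (2 * k) = 4 ^ k * (real n + 1) ^ (2 * k)"
    proof -
      have "real (2 * n + 1) + 1 = 2 * (real n + 1)" by simp
      hence "(real (2 * n + 1) + 1) ^ (2 * k) = 2 ^ (2 * k) * (real n + 1) ^ (2 * k)"
        by (simp only: power_mult_distrib)
      also have "(2::real) ^ (2 * k) = 4 ^ k" by (simp add: power_mult)
      finally show ?thesis .
    qed
    thus ?thesis by (simp add: f_def)
  qed
  have s1: "(\<lambda>n. if even n then f n else 0) sums (\<Sum>n. f (2 * n))"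
  proof (subst sums_mono_reindex[of "\<lambda>n. 2 * n", symmetric])
    show "strict_mono (\<lambda>n. 2 * n :: nat)" by (auto simp: strict_mono_def)
    fix n assume "n \<notin> range (\<lambda>n. 2 * n :: nat)"
    hence "odd n" by (metis evenE rangeI)
    thus "(if even n then f n else 0) = 0" by simp
  qed (use summable_sums[OF se] in simp)
  have s2: "(\<lambda>n. if even n then 0 else f n) sums (zz k / 4 ^ k)"
  proof (subst sums_mono_reindex[of "\<lambda>n. 2 * n + 1", symmetric])
    show "strict_mono (\<lambda>n. 2 * n + 1 :: nat)" by (auto simp: strict_mono_def)
    fix n assume "n \<notin> range (\<lambda>n. 2 * n + 1 :: nat)"
    hence "even n" by (metis oddE rangeI)
    thus "(if even n then 0 else f n) = 0" by simp
  next
    show "(\<lambda>n. if even (2 * n + 1) then 0 else f (2 * n + 1)) sums (zz k / 4 ^ k)"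
      using sums_divide[OF Zs, of "4 ^ k"] odd_eq[simplified] by simp
  qed
  have "(\<lambda>n. (if even n then f n else 0) + (if even n then 0 else f n)) sums
          ((\<Sum>n. f (2 * n)) + zz k / 4 ^ k)"
    by (rule sums_add[OF s1 s2])
  hence "f sums ((\<Sum>n. f (2 * n)) + zz k / 4 ^ k)" by (simp add: if_distrib cong: if_cong)
  thus "zz k = (\<Sum>n. f (2 * n)) + zz k / 4 ^ k" using Zs sums_unique2 by blast
qed

lemma pow_ineq: "k \<ge> 1 \<Longrightarrow> (5::real) ^ (2*k) + 3 ^ (2*k) < (3 ^ (2*k)) * (3 ^ (2*k))"
proof -
  assume "k \<ge> 1"
  then obtain j where kj: "k = Suc j" by (cases k) auto
  have a: "(5::real) ^ (2*k) = 25 * 25 ^ j" by (simp add: kj power_mult)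
  have b: "(3::real) ^ (2*k) = 9 * 9 ^ j" by (simp add: kj power_mult)
  have e: "(81::real) ^ j = 9 ^ j * 9 ^ j" by (simp add: power_mult_distrib[symmetric])
  have e2: "(9::real) * 9 ^ j * (9 * 9 ^ j) = 81 * (9 ^ j * 9 ^ j)" by simp
  have "(25::real) ^ j \<le> 81 ^ j" by (rule power_mono) auto
  moreover have "(9::real) ^ j \<le> 81 ^ j" by (rule power_mono) auto
  moreover have "(0::real) < 81 ^ j" by simp
  ultimately have "(25::real) * 25 ^ j + 9 * 9 ^ j < 81 * 81 ^ j" by linarith
  thus ?thesis unfolding a b e2 e[symmetric] .
qed

theorem corollary2p4:
  fixes a :: real and k :: nat
  assumes "a \<ge> 3" and "k \<ge> 1"
  shows "2 * fact (2 * k) / (pi ^ (2 * k) * (2 ^ (2 * k) - 1)) * (a ^ (2 * k) / (a ^ (2 * k) - 1))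
           < \<bar>bernoulli_num (2 * k)\<bar>"
proof -
  define f where "f = (\<lambda>n. 1 / (real n + 1) ^ (2 * k))"
  define Od where "Od = (\<Sum>n. f (2 * n))"
  define Z where "Z = zz k"
  define F where "F = (fact (2 * k) :: real)"
  define P where "P = pi ^ (2 * k)"
  define T where "T = (2::real) ^ (2 * k)"
  define A where "A = a ^ (2 * k)"
  define V where "V = (3::real) ^ (2 * k)"
  define W where "W = (5::real) ^ (2 * k)"
  have F0: "F > 0" by (simp add: F_def)
  have P0: "P > 0" by (simp add: P_def)
  have T4: "T = 4 ^ k" by (simp add: T_def power_mult)
  have T1: "T > 1" unfolding T_def using assms(2) by (intro one_less_power) auto
  have se: "summable (\<lambda>n. f (2 * n))" and Zeq: "Z = Od + Z / T"
    using zz_split[OF assms(2)] unfolding f_def Od_def Z_def T4 by auto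
  have ZO: "Z * (T - 1) = Od * T"
  proof -
    have "Z * T = Od * T + Z" using Zeq T1 by (simp add: field_simps)
    thus ?thesis by (simp add: algebra_simps)
  qed
  have V9: "V \<ge> 9"
  proof -
    have "(3::real) ^ 2 \<le> 3 ^ (2 * k)" using assms(2) by (intro power_increasing) auto
    thus ?thesis by (simp add: V_def)
  qed
  have W0: "W > 0" by (simp add: W_def)
  have AV: "A \<ge> V" unfolding A_def V_def using assms(1) by (intro power_mono) auto
  have O3: "1 + 1 / V + 1 / W \<le> Od"
  proof -
    have "(\<Sum>n\<in>{0,1,2}. f (2 * n)) \<le> Od"
      unfolding Od_def by (rule sum_le_suminf[OF se]) (auto simp: f_def)
    moreover have "(\<Sum>n\<in>{0,1,2}. f (2 * n)) = 1 + 1 / V + 1 / W"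
      by (simp add: f_def V_def W_def eval_nat_numeral)
    ultimately show ?thesis by simp
  qed
  have WV: "W + V < V * V" using pow_ineq[OF assms(2)] by (simp add: V_def W_def)
  have key: "A / (A - 1) < Od"
  proof -
    have "A / (A - 1) = 1 + 1 / (A - 1)" using AV V9 by (simp add: field_simps)
    also have "1 / (A - 1) \<le> 1 / (V - 1)" using AV V9 by (intro divide_left_mono) auto
    also have "1 / (V - 1) < 1 / V + 1 / W"
    proof -
      have "1 / (V - 1) - 1 / V = 1 / (V * (V - 1))" using V9 by (simp add: field_simps)
      also have "\<dots> < 1 / W" using WV W0 V9 by (intro divide_strict_left_mono) (auto simp: algebra_simps)
      finally show ?thesis by simp
    qed
    finally show ?thesis using O3 by linarith
  qed
  have Z0: "Z \<ge> 0" unfolding Z_def zz_def by (intro suminf_nonneg summable_zz) (use assms(2) in auto)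
  have B: "\<bar>bernoulli_num (2 * k)\<bar> = 2 * F * Z / (T * P)"
  proof -
    have "bernoulli_num (2 * k) = 2 * (-1)^(k + 1) * F * Z / (T * P)"
      using assms(2) by (simp add: bernoulli_num_eq Bn_def F_def Z_def T_def P_def power_mult_distrib)
    thus ?thesis using F0 Z0 T1 P0 by (simp add: abs_mult)
  qed
  have "2 * F / (P * (T - 1)) * (A / (A - 1)) < 2 * F / (P * (T - 1)) * Od"
    using key F0 P0 T1 by (intro mult_strict_left_mono) auto
  also have "\<dots> = 2 * F * Z / (T * P)"
  proof -
    have "Od = Z * (T - 1) / T" using ZO T1 by (simp add: field_simps)
    moreover have "2 * F / (P * (T - 1)) * (Z * (T - 1) / T) = 2 * F * Z / (T * P)"
      using T1 P0 by (simp add: field_simps)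
    ultimately show ?thesis by simp
  qed
  finally show ?thesis unfolding B by (simp add: F_def P_def T_def A_def)
qed

end
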